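(* Let $\mathcal{T}$ be an MPQ-tree of an interval graph $G=(V,E)$ and let $x\neq y$ be vertices with $node(x)=node(y)=P$, where $P$ is a P-node that is a leaf of $\mathcal{T}$. Then $(x,y)$ is an interval edge, i.e. $G-(x,y)$ is an interval graph.
   Context: Graphs are finite and simple; for $G=(V,E)$ and $e\in E$, $G-e=(V,E\setminus\{e\})$. An edge $(x,y)\in E$ of an interval graph $G$ is an interval edge if $G-(x,y)$ is an interval graph. An MPQ-tree of an interval graph $G=(V,E)$, $V=\{1,\dots,n\}$, is a rooted plane tree whose nodes are P-nodes and Q-nodes. Each P-node carries a (possibly empty) set of vertices. A Q-node has $k\ge 3$ ordered positions $1,\dots,k$; position $i$ carries a set $S_i\subseteq V$ (the $i$-th section) and a child subtree $T_i$, which may be empty. Every vertex $v$ is assigned to exactly one node $node(v)$: either $v$ lies in the set of the P-node $node(v)$, or $node(v)$ is a Q-node and $v$ lies exactly in the sections $S_{l(v)},\dots,S_{r(v)}$ of it, with $l(v)<r(v)$. For a node with child subtrees $T_1,\dots,T_k$, $V_i$ denotes the set of vertices assigned to nodes of $T_i$ ($V_i=\emptyset$ if $T_i$ is empty). The maximal cliques of $G$ are in bijection with the descending paths from the root which at a P-node continue into one of its children (stopping if there is none) and at a Q-node choose a position $i$ and continue into $T_i$ (stopping if $T_i$ is empty); the clique is the union of the sets of the visited P-nodes and the chosen sections. Reading these cliques left to right gives a linear order of the maximal cliques, and the orders obtained this way after arbitrarily permuting children of P-nodes and reversing the positions of Q-nodes are exactly the orders of the maximal cliques of $G$ in which the cliques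 containing any fixed vertex are consecutive. Moreover, for every Q-node with sections $S_1,\dots,S_k$: (a) $V_1\neq\emptyset$ and $V_k\ne\emptyset$; (b) $S_1\subseteq S_2$ and $S_k\subseteq S_{k-1}$; (c) $S_{i-1}\cap S_i\neq\emptyset$ for $2\le i\le k$; (d) $S_{i-1}\neq S_i$ for $2\le i\le k$; (e) $(S_i\cap S_{i+1})\setminus S_1\neq\emptyset$ and $(S_{i-1}\cap S_i)\setminus S_k\neq\emptyset$ for $2\le i\le k-1$; (f) $(S_{i-1}\cup V_{i-1})\setminus S_i\neq\emptyset$ and $(S_i\cup V_i)\setminus S_{i-1}\neq\emptyset$ for $2\le i\le k$; and further (g) no empty P-node has an empty P-node as its parent, (h) no P-node has exactly one child whose root is a P-node, (i) every child subtree of a P-node is nonempty. *)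

theory Defs
  imports Complex_Main "HOL-Library.Multiset"
begin

definition simple_graph :: "'a set \<Rightarrow> 'a set set \<Rightarrow> bool" where
  "simple_graph V E \<longleftrightarrow> finite V \<and> (\<forall>e\<in>E. \<exists>u v. e = {u, v} \<and> u \<noteq> v \<and> u \<in> V \<and> v \<in> V)"

definition interval_graph :: "'a set \<Rightarrow> 'a set set \<Rightarrow> bool" where
  "interval_graph V E \<longleftrightarrow> simple_graph V E \<and>
     (\<exists>a b :: 'a \<Rightarrow> real. (\<forall>v\<in>V. a v \<le> b v) \<and>
        (\<forall>u\<in>V. \<forall>v\<in>V. u \<noteq> v \<longrightarrow>
            ({u, v} \<in> E \<longleftrightarrow> max (a u) (a v) \<le> min (b u) (b v))))"

definition is_clique :: "'a set \<Rightarrow> 'a set set \<Rightarrow> 'a set \<Rightarrow> bool" where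
  "is_clique V E C \<longleftrightarrow> C \<subseteq> V \<and> (\<forall>u\<in>C. \<forall>v\<in>C. u \<noteq> v \<longrightarrow> {u, v} \<in> E)"

definition max_cliques :: "'a set \<Rightarrow> 'a set set \<Rightarrow> 'a set set" where
  "max_cliques V E = {C. is_clique V E C \<and> (\<forall>D. is_clique V E D \<and> C \<subseteq> D \<longrightarrow> D = C)}"

text \<open>A P-node carries a set and a list of (nonempty) child subtrees; a Q-node carries
  a list of positions, position i consisting of the section S_i and the (possibly
  empty, i.e. None) child subtree T_i.\<close>

datatype 'a mpq = PNode "'a set" "'a mpq list" | QNode "('a set \<times> 'a mpq option) list"

fun allverts :: "'a mpq \<Rightarrow> 'a set" where
  "allverts (PNode S cs) = S \<union> \<Union> (set (map allverts cs))"
| "allverts (QNode ps) = \<Union> (set (map (\<lambda>(S, t). S \<union> (case t of None \<Rightarrow> {} | Some c \<Rightarrow> allverts c)) ps))"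

definition optverts :: "'a mpq option \<Rightarrow> 'a set" where
  "optverts t = (case t of None \<Rightarrow> {} | Some c \<Rightarrow> allverts c)"

fun subtrees :: "'a mpq \<Rightarrow> 'a mpq list" where
  "subtrees (PNode S cs) = PNode S cs # concat (map subtrees cs)"
| "subtrees (QNode ps) = QNode ps # concat (map (\<lambda>(S, t). case t of None \<Rightarrow> [] | Some c \<Rightarrow> subtrees c) ps)"

text \<open>The cliques given by the descending paths from the root, read left to right.\<close>

fun cliques :: "'a mpq \<Rightarrow> 'a set list" where
  "cliques (PNode S cs) = (if cs = [] then [S] else map (\<lambda>C. S \<union> C) (concat (map cliques cs)))"
| "cliques (QNode ps) = concat (map (\<lambda>(S, t). case t of None \<Rightarrow> [S] | Some c \<Rightarrow> map (\<lambda>C. S \<union> C) (cliques c)) ps)"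

inductive mpq_equiv :: "'a mpq \<Rightarrow> 'a mpq \<Rightarrow> bool" where
  P: "list_all2 mpq_equiv cs ds \<Longrightarrow> mset es = mset ds \<Longrightarrow> mpq_equiv (PNode S cs) (PNode S es)"
| Q: "list_all2 (rel_prod (=) (rel_option mpq_equiv)) ps qs \<Longrightarrow>
      (rs = qs \<or> rs = rev qs) \<Longrightarrow> mpq_equiv (QNode ps) (QNode rs)"
monos list_all2_mono prod.rel_mono option.rel_mono

definition consecutive_order :: "'a set list \<Rightarrow> bool" where
  "consecutive_order L \<longleftrightarrow> (\<forall>v i j k. i < j \<and> j < k \<and> k < length L \<and> v \<in> L ! i \<and> v \<in> L ! k \<longrightarrow> v \<in> L ! j)"

text \<open>Local conditions at a node (vertex assignment in a Q-node, disjointness of the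
  assignment, and conditions (a)--(h); (i) holds by construction of the datatype).\<close>

fun node_ok :: "'a mpq \<Rightarrow> bool" where
  "node_ok (PNode S cs) \<longleftrightarrow>
     (\<forall>c\<in>set cs. S \<inter> allverts c = {}) \<and>
     (\<forall>i<length cs. \<forall>j<length cs. i \<noteq> j \<longrightarrow> allverts (cs ! i) \<inter> allverts (cs ! j) = {}) \<and>
     \<comment> \<open>(g)\<close>
     (S = {} \<longrightarrow> (\<forall>c\<in>set cs. \<forall>cs'. c \<noteq> PNode {} cs')) \<and>
     \<comment> \<open>(h)\<close>
     (\<forall>S' cs'. cs \<noteq> [PNode S' cs'])"
| "node_ok (QNode ps) \<longleftrightarrow>
     (let k = length ps; Sec = (\<lambda>i. fst (ps ! i)); Vi = (\<lambda>i. optverts (snd (ps ! i))) in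
      k \<ge> 3 \<and>
      \<comment> \<open>each vertex of the Q-node lies in exactly the sections l..r, l < r\<close>
      (\<forall>v\<in>(\<Union>i<k. Sec i). \<exists>l r. l < r \<and> r < k \<and> (\<forall>i<k. v \<in> Sec i \<longleftrightarrow> l \<le> i \<and> i \<le> r)) \<and>
      \<comment> \<open>disjointness of the assignment\<close>
      (\<forall>i<k. (\<Union>j<k. Sec j) \<inter> Vi i = {}) \<and>
      (\<forall>i<k. \<forall>j<k. i \<noteq> j \<longrightarrow> Vi i \<inter> Vi j = {}) \<and>
      \<comment> \<open>(a)\<close>
      Vi 0 \<noteq> {} \<and> Vi (k - 1) \<noteq> {} \<and>
      \<comment> \<open>(b)\<close>
      Sec 0 \<subseteq> Sec 1 \<and> Sec (k - 1) \<subseteq> Sec (k - 2) \<and>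
      \<comment> \<open>(c), (d), (f)\<close>
      (\<forall>i. 1 \<le> i \<and> i < k \<longrightarrow>
          Sec (i - 1) \<inter> Sec i \<noteq> {} \<and> Sec (i - 1) \<noteq> Sec i \<and>
          (Sec (i - 1) \<union> Vi (i - 1)) - Sec i \<noteq> {} \<and> (Sec i \<union> Vi i) - Sec (i - 1) \<noteq> {}) \<and>
      \<comment> \<open>(e)\<close>
      (\<forall>i. 1 \<le> i \<and> i \<le> k - 2 \<longrightarrow>
          (Sec i \<inter> Sec (i + 1)) - Sec 0 \<noteq> {} \<and> (Sec (i - 1) \<inter> Sec i) - Sec (k - 1) \<noteq> {}))"

definition is_mpq_tree :: "'a set \<Rightarrow> 'a set set \<Rightarrow> 'a mpq \<Rightarrow> bool" where
  "is_mpq_tree V E T \<longleftrightarrow>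
     interval_graph V E \<and>
     allverts T = V \<and>
     (\<forall>N\<in>set (subtrees T). node_ok N) \<and>
     distinct (cliques T) \<and> set (cliques T) = max_cliques V E \<and>
     {cliques T' | T'. mpq_equiv T T'} =
       {L. distinct L \<and> set L = max_cliques V E \<and> consecutive_order L}"

end

theory Submission imports Defs begin

lemma cliques_sub: "C \<in> set (cliques T) \<Longrightarrow> C \<subseteq> allverts T"
proof (induction T arbitrary: C rule: cliques.induct)
  case (1 S cs)
  then show ?case by (fastforce split: if_splits)
next
  case (2 ps)
  then show ?case by (fastforce split: option.splits)
qed

lemma subtree_verts: "T' \<in> set (subtrees T) \<Longrightarrow> allverts T' \<subseteq> allverts T"
proof (induction T rule: subtrees.induct)
  case (1 S cs)
  then show ?case by fastforce
next
  case (2 ps)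
  then show ?case by (fastforce split: option.splits)
qed

lemma subtree_trans: "T' \<in> set (subtrees T) \<Longrightarrow> set (subtrees T') \<subseteq> set (subtrees T)"
proof (induction T rule: subtrees.induct)
  case (1 S cs)
  then show ?case by fastforce
next
  case (2 ps)
  then show ?case by (fastforce split: option.splits)
qed

lemma self_sub: "T \<in> set (subtrees T)"
  by (cases T) auto


lemma leaf_unique:
  "PNode S [] \<in> set (subtrees T) \<Longrightarrow> \<forall>N\<in>set (subtrees T). node_ok N \<Longrightarrow>
   \<exists>C0\<in>set (cliques T). S \<subseteq> C0 \<and> (\<forall>x\<in>S. \<forall>C\<in>set (cliques T). x \<in> C \<longrightarrow> C = C0)"
proof (induction T rule: subtrees.induct)
  case (1 S' cs)
  show ?case
  proof (cases "PNode S [] = PNode S' cs")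
    case True
    then show ?thesis by auto
  next
    case False
    with "1.prems"(1) obtain c where c: "c \<in> set cs" "PNode S [] \<in> set (subtrees c)" by auto
    have okc: "\<forall>N\<in>set (subtrees c). node_ok N" using "1.prems"(2) c(1) by auto
    obtain C0' where C0': "C0' \<in> set (cliques c)" "S \<subseteq> C0'"
       "\<forall>x\<in>S. \<forall>C\<in>set (cliques c). x \<in> C \<longrightarrow> C = C0'"
      using "1.IH"[OF c(1) c(2) okc] by blast
    have ok: "node_ok (PNode S' cs)" using "1.prems"(2) by simp
    have Sc: "S \<subseteq> allverts c" using subtree_verts[OF c(2)] by simp
    have cne: "cs \<noteq> []" using c by auto
    show ?thesis
    proof (rule bexI[of _ "S' \<union> C0'"], intro conjI ballI impI)
      show "S' \<union> C0' \<in> set (cliques (PNode S' cs))" using cne c(1) C0'(1) by auto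
      show "S \<subseteq> S' \<union> C0'" using C0' by auto
      fix x C assume x: "x \<in> S" and C: "C \<in> set (cliques (PNode S' cs))" and xC: "x \<in> C"
      from C cne obtain D c' where D: "c' \<in> set cs" "D \<in> set (cliques c')" "C = S' \<union> D" by auto
      have "x \<notin> S'" using ok c(1) Sc x by auto
      hence xD: "x \<in> D" using xC D by auto
      have "c' = c"
      proof (rule ccontr)
        assume ne: "c' \<noteq> c"
        obtain i where i: "i < length cs" "cs ! i = c" using c(1) by (meson in_set_conv_nth)
        obtain j where j: "j < length cs" "cs ! j = c'" using D(1) by (meson in_set_conv_nth)
        have "i \<noteq> j" using i j ne by auto
        hence "allverts c \<inter> allverts c' = {}" using ok i j by (metis node_ok.simps(1))
        moreover have "x \<in> allverts c'" using cliques_sub[OF D(2)] xD by auto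
        ultimately show False using Sc x by auto
      qed
      then show "C = S' \<union> C0'" using C0'(3) x xD D by auto
    qed
  qed
next
  case (2 ps)
  from "2.prems"(1) obtain S2 c where c: "(S2, Some c) \<in> set ps" "PNode S [] \<in> set (subtrees c)"
    by (auto split: option.splits)
  have okc: "\<forall>N\<in>set (subtrees c). node_ok N" using "2.prems"(2) c(1) by (force split: option.splits)
  obtain C0' where C0': "C0' \<in> set (cliques c)" "S \<subseteq> C0'"
       "\<forall>x\<in>S. \<forall>C\<in>set (cliques c). x \<in> C \<longrightarrow> C = C0'"
    using "2.IH"[OF c(1) refl _ c(2) okc] by auto
  have ok: "node_ok (QNode ps)" using "2.prems"(2) by simp
  have Sc: "S \<subseteq> allverts c" using subtree_verts[OF c(2)] by simp
  obtain i where i: "i < length ps" "ps ! i = (S2, Some c)" using c(1) by (meson in_set_conv_nth)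
  have disj1: "\<forall>i<length ps. (\<Union>j<length ps. fst (ps ! j)) \<inter> optverts (snd (ps ! i)) = {}"
    and disj2: "\<forall>i<length ps. \<forall>j<length ps. i \<noteq> j \<longrightarrow> optverts (snd (ps ! i)) \<inter> optverts (snd (ps ! j)) = {}"
    using ok by (simp_all add: Let_def)
  show ?case
  proof (rule bexI[of _ "S2 \<union> C0'"], intro conjI ballI impI)
    show "S2 \<union> C0' \<in> set (cliques (QNode ps))" using c(1) C0'(1) by force
    show "S \<subseteq> S2 \<union> C0'" using C0' by auto
    fix x C assume x: "x \<in> S" and C: "C \<in> set (cliques (QNode ps))" and xC: "x \<in> C"
    have xi: "x \<in> optverts (snd (ps ! i))" using i Sc x by (auto simp add: optverts_def)
    have notsec: "x \<notin> fst (ps ! j)" if "j < length ps" for j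
      using disj1 i(1) xi that by blast
    from C obtain p where p: "p \<in> set ps" and
      Cp: "C \<in> set (case p of (S, t) \<Rightarrow> (case t of None \<Rightarrow> [S] | Some c \<Rightarrow> map ((\<union>) S) (cliques c)))"
      by auto
    obtain j where j: "j < length ps" "ps ! j = p" using p by (meson in_set_conv_nth)
    obtain S3 t where p3: "p = (S3, t)" by fastforce
    have pj: "ps ! j = (S3, t)" using j p3 by simp
    have Cj: "C \<in> set (case t of None \<Rightarrow> [S3] | Some c \<Rightarrow> map ((\<union>) S3) (cliques c))" using Cp p3 by simp
    show "C = S2 \<union> C0'"
    proof (cases t)
      case None
      then have "C = S3" using Cj pj by auto
      then show ?thesis using xC notsec[OF j(1)] pj by auto
    next
      case (Some c')
      then obtain D where D: "D \<in> set (cliques c')" "C = S3 \<union> D" using Cj pj by auto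
      have xD: "x \<in> D" using xC D notsec[OF j(1)] pj by auto
      have "x \<in> optverts (snd (ps ! j))" using cliques_sub[OF D(1)] xD pj Some by (auto simp: optverts_def)
      hence "j = i" using disj2 i(1) j(1) xi by blast
      then have "S3 = S2" "c' = c" using pj i Some by auto
      then show ?thesis using C0'(3) x xD D by auto
    qed
  qed
qed


lemma extend_max_clique:
  assumes "finite V" "is_clique V E K"
  shows "\<exists>M\<in>max_cliques V E. K \<subseteq> M"
proof -
  let ?A = "{D. is_clique V E D \<and> K \<subseteq> D}"
  have "?A \<subseteq> Pow V" by (auto simp: is_clique_def)
  hence fin: "finite ?A" using assms(1) by (meson finite_Pow_iff finite_subset)
  have "?A \<noteq> {}" using assms(2) by auto
  then obtain m where m: "m \<in> ?A" "\<forall>b\<in>?A. m \<le> b \<longrightarrow> m = b"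
    using finite_has_maximal[OF fin] by blast
  have "m \<in> max_cliques V E" using m unfolding max_cliques_def by auto
  then show ?thesis using m by blast
qed

lemma gh_cmp:
  fixes L t s :: real
  shows "((if t \<le> L then t else t + 1) \<le> (if s < L then s else s + 1)) \<longleftrightarrow> t \<le> s"
  by auto

theorem mainTheorem3:
  fixes V :: "'a set" and E :: "'a set set" and T :: "'a mpq"
    and S :: "'a set" and x y :: 'a
  assumes "interval_graph V E"
    and "is_mpq_tree V E T"
    and "PNode S [] \<in> set (subtrees T)"
    and "x \<in> S" and "y \<in> S" and "x \<noteq> y"
  shows "interval_graph V (E - {{x, y}})"
proof -
  have sg: "simple_graph V E" using assms(1) by (simp add: interval_graph_def)
  hence finV: "finite V" by (simp add: simple_graph_def)
  obtain a b :: "'a \<Rightarrow> real" where ab: "\<forall>v\<in>V. a v \<le> b v"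
    and rep: "\<forall>u\<in>V. \<forall>v\<in>V. u \<noteq> v \<longrightarrow> ({u, v} \<in> E \<longleftrightarrow> max (a u) (a v) \<le> min (b u) (b v))"
    using assms(1) unfolding interval_graph_def by blast
  have ok: "\<forall>N\<in>set (subtrees T). node_ok N" and cl: "set (cliques T) = max_cliques V E"
    using assms(2) by (auto simp: is_mpq_tree_def)
  obtain C0 where C0: "C0 \<in> set (cliques T)" "S \<subseteq> C0"
    "\<forall>x\<in>S. \<forall>C\<in>set (cliques T). x \<in> C \<longrightarrow> C = C0"
    using leaf_unique[OF assms(3) ok] by blast
  have C0m: "C0 \<in> max_cliques V E" using C0(1) cl by simp
  hence C0c: "is_clique V E C0" by (simp add: max_cliques_def)
  hence C0V: "C0 \<subseteq> V" by (simp add: is_clique_def)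
  have xC: "x \<in> C0" and yC: "y \<in> C0" using C0(2) assms(4,5) by auto
  have nb: "v \<in> C0" if w: "w \<in> S" and e: "{w, v} \<in> E" for w v
  proof -
    obtain u1 u2 where "{w, v} = {u1, u2}" "u1 \<noteq> u2" "u1 \<in> V" "u2 \<in> V"
      using sg e unfolding simple_graph_def by blast
    hence wv: "w \<noteq> v" "w \<in> V" "v \<in> V" by (auto simp: doubleton_eq_iff)
    have "is_clique V E {w, v}" using wv e unfolding is_clique_def by (auto simp: insert_commute)
    then obtain M where M: "M \<in> max_cliques V E" "{w, v} \<subseteq> M"
      using extend_max_clique[OF finV] by blast
    have "M = C0" using C0(3) w M cl by auto
    then show ?thesis using M by auto
  qed
  define L where "L = Max (a ` C0)"
  have finC: "finite C0" using C0V finV finite_subset by blast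
  have LC: "a w \<le> L \<and> L \<le> b w" if "w \<in> C0" for w
  proof
    show "a w \<le> L" unfolding L_def using finC that by simp
    have "L \<in> a ` C0" unfolding L_def using finC that by (intro Max_in) auto
    then obtain w' where w': "w' \<in> C0" "L = a w'" by auto
    show "L \<le> b w"
    proof (cases "w' = w")
      case True then show ?thesis using w' ab C0V that by auto
    next
      case False
      hence "{w', w} \<in> E" using C0c w' that unfolding is_clique_def by blast
      hence "max (a w') (a w) \<le> min (b w') (b w)" using rep w' that C0V False by blast
      then show ?thesis using w' by simp
    qed
  qed
  have key: "{w, v} \<in> E \<longleftrightarrow> a v \<le> L \<and> L \<le> b v" if w: "w \<in> S" "w \<in> C0" and v: "v \<in> V" "v \<noteq> w" for w v
  proof
    assume "{w, v} \<in> E" thus "a v \<le> L \<and> L \<le> b v" using nb[OF w(1)] LC by blast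
  next
    assume "a v \<le> L \<and> L \<le> b v"
    moreover have "a w \<le> L \<and> L \<le> b w" using LC w by blast
    ultimately have "max (a w) (a v) \<le> min (b w) (b v)" by simp
    moreover have "w \<in> V" using w C0V by blast
    ultimately show "{w, v} \<in> E" using rep v by metis
  qed
  define a' where "a' = (\<lambda>v. if v = x then L else if v = y then L + 1 else
      (if a v \<le> L then a v else a v + 1))"
  define b' where "b' = (\<lambda>v. if v = x then L else if v = y then L + 1 else
      (if b v < L then b v else b v + 1))"
  have "simple_graph V (E - {{x, y}})" using sg unfolding simple_graph_def by blast
  moreover have "\<forall>v\<in>V. a' v \<le> b' v" using ab unfolding a'_def b'_def by auto
  moreover have "\<forall>u\<in>V. \<forall>v\<in>V. u \<noteq> v \<longrightarrow>
      ({u, v} \<in> E - {{x, y}} \<longleftrightarrow> max (a' u) (a' v) \<le> min (b' u) (b' v))"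
  proof (intro ballI impI)
    fix u v assume u: "u \<in> V" and v: "v \<in> V" and uv: "u \<noteq> v"
    have side: "{w, z} \<in> E - {{x, y}} \<longleftrightarrow> max (a' w) (a' z) \<le> min (b' w) (b' z)"
      if wz: "w = x \<or> w = y" "z \<noteq> x" "z \<noteq> y" "z \<in> V" for w z
    proof -
      have "{w, z} \<noteq> {x, y}" using wz by (auto simp: doubleton_eq_iff)
      moreover have "{w, z} \<in> E \<longleftrightarrow> a z \<le> L \<and> L \<le> b z"
        using key[of w z] wz assms(4,5) xC yC by auto
      moreover have "max (a' w) (a' z) \<le> min (b' w) (b' z) \<longleftrightarrow> a z \<le> L \<and> L \<le> b z"
        using wz assms(6) unfolding a'_def b'_def by auto
      ultimately show ?thesis by blast
    qed
    show "{u, v} \<in> E - {{x, y}} \<longleftrightarrow> max (a' u) (a' v) \<le> min (b' u) (b' v)"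
    proof (cases "u \<in> {x, y} \<and> v \<in> {x, y}")
      case True
      hence "{u, v} = {x, y}" using uv by auto
      moreover have "\<not> max (a' u) (a' v) \<le> min (b' u) (b' v)"
        using True uv assms(6) unfolding a'_def b'_def by auto
      ultimately show ?thesis by blast
    next
      case False
      show ?thesis
      proof (cases "u \<in> {x, y}")
        case True
        with False have "v \<noteq> x" "v \<noteq> y" by auto
        then show ?thesis using side[of u v] True v by auto
      next
        case uF: False
        show ?thesis
        proof (cases "v \<in> {x, y}")
          case True
          with uF have "u \<noteq> x" "u \<noteq> y" by auto
          then show ?thesis using side[of v u] True u by (auto simp: insert_commute max.commute min.commute)
        next
          case vF: False
          have ne: "{u, v} \<noteq> {x, y}" using uF by (auto simp: doubleton_eq_iff)
          have "max (a' u) (a' v) \<le> min (b' u) (b' v) \<longleftrightarrow> max (a u) (a v) \<le> min (b u) (b v)"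
            using uF vF unfolding a'_def b'_def by (auto simp: gh_cmp simp del: if_split)
          then show ?thesis using rep u v uv ne by blast
        qed
      qed
    qed
  qed
  ultimately show ?thesis unfolding interval_graph_def by blast
qed

end
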